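(* Let $n\ge 1$ and $k\ge 1$ be integers, let $A=(a_{pq})$ be a real $n\times n$ matrix, and let $j\in\{1,\dots,n\}$ be such that $a_{1j}>0$. Suppose $\lambda>0$ is a simple eigenvalue of $A$ and $A\mathbf u=\lambda\mathbf u$, $\mathbf v^TA=\lambda\mathbf v^T$ for some entrywise positive vectors $\mathbf u,\mathbf v\in\mathbb R^n$. Define the real $(k+n)\times(k+n)$ matrix $B=(b_{pq})$ by $$b_{pq}=\begin{cases} 2\lambda,&\text{if }p=q\in\{1,\dots,k\};\\ -\lambda,&\text{if }(p,q)\in\{(k,k+j)\}\cup\{(1,2),(2,3),\dots,(k-1,k)\};\\ -a_{1j},&\text{if }(p,q)=(k+1,1);\\ a_{p-k,q-k},&\text{if }p,q\in\{k+1,\dots,k+n\}\text{ and }(p,q)\neq(k+1,k+j);\\ 2a_{1j},&\text{if }(p,q)=(k+1,k+j);\\ 0,&\text{otherwise}. \end{cases}$$ Then $\lambda$ is a simple eigenvalue of $B$, and $B\mathbf w=\lambda\mathbf w$, $\mathbf z^TB=\lambda\mathbf z^T$, where $w_i=u_j$ and $z_i=\frac{a_{1j}v_1}{\lambda}$ for $1\le i\le k$, and $w_i=u_{i-k}$, $z_i=v_{i-k}$ for $k+1\le i\le k+n$. Consequently, $B$ is algebraically positive.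
   Context: A real square matrix $M$ is algebraically positive if there is a real polynomial $f$ such that every entry of $f(M)$ is positive. A simple eigenvalue is one of algebraic multiplicity one. *)

theory Defs
  imports "Jordan_Normal_Form.Char_Poly"
begin

definition mat_poly_eval :: "real poly \<Rightarrow> real mat \<Rightarrow> real mat" where
  "mat_poly_eval f M = mat (dim_row M) (dim_col M)
     (\<lambda>(p,q). \<Sum>i\<le>degree f. coeff f i * (M ^\<^sub>m i) $$ (p,q))"

definition algebraically_positive :: "real mat \<Rightarrow> bool" where
  "algebraically_positive M \<longleftrightarrow> square_mat M \<and>
     (\<exists>f :: real poly. \<forall>p < dim_row M. \<forall>q < dim_col M. mat_poly_eval f M $$ (p,q) > 0)"

definition simple_eigenvalue :: "real mat \<Rightarrow> real \<Rightarrow> bool" where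
  "simple_eigenvalue A l \<longleftrightarrow> order l (char_poly A) = 1"

text \<open>The matrix B of the theorem, written with the paper's 1-based indices:
  entry (p,q) (1-based) is stored at position (p-1,q-1); a p q = A (p-1, q-1).\<close>
definition thm23_B :: "nat \<Rightarrow> nat \<Rightarrow> real mat \<Rightarrow> nat \<Rightarrow> real \<Rightarrow> real mat" where
  "thm23_B n k A j l = mat (k+n) (k+n) (\<lambda>(p0,q0).
     let p = p0 + 1; q = q0 + 1; a = (\<lambda>r s. A $$ (r - 1, s - 1)) in
     if p = q \<and> p \<in> {1..k} then 2 * l
     else if (p,q) \<in> {(k, k+j)} \<union> {(i, i+1) | i. 1 \<le> i \<and> i \<le> k - 1} then - l
     else if (p,q) = (k+1, 1) then - a 1 j
     else if p \<in> {k+1..k+n} \<and> q \<in> {k+1..k+n} \<and> (p,q) \<noteq> (k+1, k+j) then a (p-k) (q-k)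
     else if (p,q) = (k+1, k+j) then 2 * a 1 j
     else 0)"

end

theory Submission
  imports Defs
begin



lemma sum_lessThan_Suc_first: "(\<Sum>c<Suc m. f c) = f 0 + (\<Sum>c<m. f (Suc c))"
  by (rule sum.lessThan_Suc_shift)

lemma sum_delta_r: "j < (n::nat) \<Longrightarrow> (\<Sum>c<n. f c * (if c = j then 1 else (0::real))) = f j"
proof -
  assume j: "j < n"
  have "(\<Sum>c<n. f c * (if c = j then 1 else (0::real))) = (\<Sum>c\<in>{j}. f c * (if c = j then 1 else (0::real)))"
    by (rule sum.mono_neutral_right; use j in auto)
  then show ?thesis by simp
qed

lemma sum_delta_r': "j < (n::nat) \<Longrightarrow> (\<Sum>c<n. f c * (if j = c then 1 else (0::real))) = f j"
  using sum_delta_r[of j n f] by (simp add: eq_commute[of j])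

lemma PQ_inv:
  fixes w :: "real vec"
  assumes n: "n = Suc m" and w0: "w $ 0 \<noteq> 0"
  defines "P \<equiv> mat n n (\<lambda>(i,j). if j = 0 then w$i else if i = j then 1 else (0::real))"
  defines "Q \<equiv> mat n n (\<lambda>(i,j). if j = 0 then (if i = 0 then 1 / w$0 else - w$i / w$0) else if i = j then 1 else (0::real))"
  shows "P * Q = 1\<^sub>m n"
proof (rule eq_matI)
  fix i j assume i: "i < dim_row (1\<^sub>m n)" and j: "j < dim_col (1\<^sub>m n)"
  have e: "(P*Q) $$ (i,j) = (\<Sum>c<n. P$$(i,c) * Q$$(c,j))"
    using i j by (simp add: P_def Q_def scalar_prod_def atLeast0LessThan)
  show "(P*Q) $$ (i,j) = 1\<^sub>m n $$ (i,j)"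
  proof (cases "j = 0")
    case True
    have "(\<Sum>c<m. P$$(i,Suc c) * Q$$(Suc c,j)) = (\<Sum>c<m. if i = Suc c then - w$i / w$0 else 0)"
      using i j True n by (intro sum.cong) (auto simp: P_def Q_def)
    also have "\<dots> = (if i = 0 then 0 else - w$i / w$0)"
      using i n by (cases i) auto
    finally have s: "(\<Sum>c<m. P$$(i,Suc c) * Q$$(Suc c,j)) = (if i = 0 then 0 else - w$i / w$0)" .
    have "(P*Q) $$ (i,j) = P$$(i,0)*Q$$(0,j) + (\<Sum>c<m. P$$(i,Suc c) * Q$$(Suc c,j))"
      unfolding e n by (rule sum_lessThan_Suc_first)
    also have "\<dots> = 1\<^sub>m n $$ (i,j)" unfolding s using i j True n w0 by (simp add: P_def Q_def)
    finally show ?thesis .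
  next
    case False
    have "(\<Sum>c<n. P$$(i,c) * Q$$(c,j)) = (\<Sum>c<n. if c = j then P$$(i,j) else 0)"
      using i j False by (intro sum.cong) (auto simp: P_def Q_def)
    then show ?thesis using e i j False by (simp add: P_def)
  qed
qed (auto simp: P_def Q_def)

definition KP :: "real mat \<Rightarrow> nat \<Rightarrow> real \<Rightarrow> real vec \<Rightarrow> bool" where
 "KP M n l w \<longleftrightarrow> (\<forall>x \<in> carrier_vec n. \<forall>c. M *\<^sub>v x = l \<cdot>\<^sub>v x + c \<cdot>\<^sub>v w \<longrightarrow> (\<exists>d. x = d \<cdot>\<^sub>v w))"

lemma gen:
  fixes M :: "real mat"
  assumes M: "M \<in> carrier_mat n n" and n: "n = Suc m" and w: "w \<in> carrier_vec n" and w0: "w $ 0 \<noteq> 0"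
    and ev: "M *\<^sub>v w = l \<cdot>\<^sub>v w"
  shows "\<exists>g. char_poly M = [:-l,1:] * g \<and> (poly g l \<noteq> 0 \<longleftrightarrow> KP M n l w)"
proof -
  define P where "P \<equiv> mat n n (\<lambda>(i,j). if j = 0 then w$i else if i = j then 1 else (0::real))"
  define Q where "Q \<equiv> mat n n (\<lambda>(i,j). if j = 0 then (if i = 0 then 1 / w$0 else - w$i / w$0) else if i = j then 1 else (0::real))"
  have P: "P \<in> carrier_mat n n" and Q: "Q \<in> carrier_mat n n" unfolding P_def Q_def by auto
  have PQ: "P * Q = 1\<^sub>m n" unfolding P_def Q_def by (rule PQ_inv[OF n w0])
  have QP: "Q * P = 1\<^sub>m n" by (rule mat_mult_left_right_inverse[OF P Q PQ])
  define C where "C = Q * M * P"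
  have C: "C \<in> carrier_mat n n" using Q M P by (simp add: C_def)
  have MC: "M = P * C * Q"
  proof -
    have "P * C * Q = (P * Q) * M * (P * Q)" unfolding C_def
      using P Q M by (simp add: assoc_mult_mat[of _ n n _ n _ n])
    also have "\<dots> = M" using PQ M by simp
    finally show ?thesis by simp
  qed
  have sim: "similar_mat M C" unfolding similar_mat_def similar_mat_wit_def Let_def
    using P Q M C PQ QP MC by (intro exI[of _ P] exI[of _ Q]) auto
  have cp: "char_poly M = char_poly C" by (rule char_poly_similar[OF sim])
  let ?e = "unit_vec n 0"
  have Pe: "P *\<^sub>v ?e = w"
    by (rule eq_vecI) (use w n in \<open>auto simp: P_def scalar_prod_def atLeast0LessThan sum_delta_r sum_delta_r' simp del: sum.lessThan_Suc\<close>)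
  have Qw: "Q *\<^sub>v w = ?e"
  proof -
    have "Q *\<^sub>v w = Q *\<^sub>v (P *\<^sub>v ?e)" using Pe by simp
    also have "\<dots> = (Q * P) *\<^sub>v ?e" using P Q by simp
    finally show ?thesis using QP by simp
  qed
  have Ce: "C *\<^sub>v ?e = l \<cdot>\<^sub>v ?e"
  proof -
    have MP: "M * P \<in> carrier_mat n n" using M P by simp
    have "C *\<^sub>v ?e = Q *\<^sub>v (M *\<^sub>v (P *\<^sub>v ?e))" unfolding C_def
      using P Q M MP by (simp add: assoc_mult_mat[OF Q M P] assoc_mult_mat_vec[OF Q MP] assoc_mult_mat_vec[OF M P])
    also have "\<dots> = l \<cdot>\<^sub>v ?e" unfolding Pe ev using mult_mat_vec[OF Q w] Qw by simp
    finally show ?thesis .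
  qed
  have Ccol: "C $$ (i,0) = (if i = 0 then l else 0)" if i: "i < n" for i
  proof -
    have "(C *\<^sub>v ?e) $ i = C $$ (i,0)"
      using C i n by (simp add: scalar_prod_def atLeast0LessThan sum_delta_r sum_delta_r' del: sum.lessThan_Suc)
    then show ?thesis using Ce i by (cases "i = 0") simp_all
  qed
  define C1 where "C1 = mat 1 1 (\<lambda>_. l)"
  define C2 where "C2 = mat 1 m (\<lambda>(_,j). C $$ (0, Suc j))"
  define C4 where "C4 = mat m m (\<lambda>(i,j). C $$ (Suc i, Suc j))"
  have C4c: "C4 \<in> carrier_mat m m" unfolding C4_def by simp
  have Cb: "C = four_block_mat C1 C2 (0\<^sub>m m 1) C4"
  proof (rule eq_matI)
    fix i j assume i: "i < dim_row (four_block_mat C1 C2 (0\<^sub>m m 1) C4)"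
      and j: "j < dim_col (four_block_mat C1 C2 (0\<^sub>m m 1) C4)"
    then have i': "i < n" and j': "j < n" using n by (auto simp: C1_def C4_def)
    show "C $$ (i,j) = four_block_mat C1 C2 (0\<^sub>m m 1) C4 $$ (i,j)"
      using i j Ccol[OF i'] Ccol[of i] n by (cases i; cases j) (auto simp: C1_def C2_def C4_def)
  qed (use C n in \<open>auto simp: C1_def C4_def\<close>)
  have cpC: "char_poly C = char_poly C1 * char_poly C4"
    unfolding Cb by (rule char_poly_four_block_zeros_col) (auto simp: C1_def C2_def C4_def)
  have cp1: "char_poly C1 = [:-l,1:]"
    by (subst char_poly_upper_triangular[of _ 1]) (auto simp: C1_def upper_triangular_def diag_mat_def)
  have eig: "poly (char_poly C4) l = 0 \<longleftrightarrow> \<not> KP M n l w"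
  proof
    assume "poly (char_poly C4) l = 0"
    then have "eigenvalue C4 l" using eigenvalue_root_char_poly[OF C4c] by simp
    then obtain y where y: "y \<in> carrier_vec m" "y \<noteq> 0\<^sub>v m" "C4 *\<^sub>v y = l \<cdot>\<^sub>v y"
      unfolding eigenvalue_def eigenvector_def using C4c by auto
    define x' where "x' = vec n (\<lambda>i. if i = 0 then 0 else y $ (i - 1))"
    have x'c: "x' \<in> carrier_vec n" unfolding x'_def by simp
    define s where "s = (C *\<^sub>v x') $ 0"
    have Cx': "C *\<^sub>v x' = l \<cdot>\<^sub>v x' + s \<cdot>\<^sub>v ?e"
    proof (rule eq_vecI)
      fix i assume "i < dim_vec (l \<cdot>\<^sub>v x' + s \<cdot>\<^sub>v ?e)"
      then have i: "i < n" by simp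
      show "(C *\<^sub>v x') $ i = (l \<cdot>\<^sub>v x' + s \<cdot>\<^sub>v ?e) $ i"
      proof (cases i)
        case 0 then show ?thesis using i x'c by (simp add: s_def x'_def)
      next
        case (Suc i0)
        have "(C *\<^sub>v x') $ i = (\<Sum>c<n. C $$ (i,c) * x' $ c)"
          using C i by (simp add: scalar_prod_def atLeast0LessThan x'_def)
        also have "\<dots> = C $$ (i,0) * x' $ 0 + (\<Sum>c<m. C $$ (i,Suc c) * x' $ Suc c)"
          unfolding n by (rule sum_lessThan_Suc_first)
        also have "\<dots> = (\<Sum>c<m. C4 $$ (i0, c) * y $ c)"
          using Suc i n by (auto simp: x'_def C4_def intro!: sum.cong)
        also have "\<dots> = (C4 *\<^sub>v y) $ i0"
          using C4c y(1) Suc i n by (simp add: scalar_prod_def atLeast0LessThan)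
        also have "\<dots> = l * y $ i0" using y Suc i n by simp
        finally show ?thesis using Suc i x'c by (simp add: x'_def)
      qed
    qed (use C x'c in auto)
    define x where "x = P *\<^sub>v x'"
    have xc: "x \<in> carrier_vec n" unfolding x_def using P x'c by simp
    have CQ: "C * Q \<in> carrier_mat n n" using C Q by simp
    have Px: "P *\<^sub>v x' \<in> carrier_vec n" using P x'c by simp
    have "M *\<^sub>v x = P *\<^sub>v (C *\<^sub>v ((Q * P) *\<^sub>v x'))"
      unfolding MC x_def using P Q C x'c
      by (simp add: assoc_mult_mat[OF P C Q] assoc_mult_mat_vec[OF P CQ Px] assoc_mult_mat_vec[OF C Q Px])
    also have "\<dots> = P *\<^sub>v (l \<cdot>\<^sub>v x' + s \<cdot>\<^sub>v ?e)" using QP x'c Cx' by simp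
    also have "\<dots> = l \<cdot>\<^sub>v x + s \<cdot>\<^sub>v w"
      using P x'c Pe by (simp add: mult_add_distrib_mat_vec mult_mat_vec x_def)
    finally have "M *\<^sub>v x = l \<cdot>\<^sub>v x + s \<cdot>\<^sub>v w" .
    show "\<not> KP M n l w"
    proof
      assume "KP M n l w"
      then obtain d where d: "x = d \<cdot>\<^sub>v w" using xc \<open>M *\<^sub>v x = l \<cdot>\<^sub>v x + s \<cdot>\<^sub>v w\<close> unfolding KP_def by blast
      have "x' = (Q * P) *\<^sub>v x'" using QP x'c by simp
      also have "\<dots> = Q *\<^sub>v x" using P Q x'c by (simp add: x_def)
      also have "\<dots> = d \<cdot>\<^sub>v ?e" using d mult_mat_vec[OF Q w] Qw by simp
      finally have "x' = d \<cdot>\<^sub>v ?e" .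
      note x'd = this
      have "y = 0\<^sub>v m"
      proof (rule eq_vecI)
        fix i assume "i < dim_vec (0\<^sub>v m :: real vec)" then have i: "i < m" by simp
        have "x' $ Suc i = (d \<cdot>\<^sub>v ?e) $ Suc i" using x'd by simp
        then show "y $ i = 0\<^sub>v m $ i" using i n by (simp add: x'_def)
      qed (use y in simp)
      with y show False by simp
    qed
  next
    assume nKP: "\<not> KP M n l w"
    then obtain x c where xc: "x \<in> carrier_vec n" and Mx: "M *\<^sub>v x = l \<cdot>\<^sub>v x + c \<cdot>\<^sub>v w"
      and nd: "\<And>d. x \<noteq> d \<cdot>\<^sub>v w" unfolding KP_def by blast
    define x' where "x' = Q *\<^sub>v x"
    have x'c: "x' \<in> carrier_vec n" unfolding x'_def using Q xc by simp
    have Cx': "C *\<^sub>v x' = l \<cdot>\<^sub>v x' + c \<cdot>\<^sub>v ?e"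
    proof -
      have MP: "M * P \<in> carrier_mat n n" using M P by simp
      have Qx: "Q *\<^sub>v x \<in> carrier_vec n" using Q xc by simp
      have "C *\<^sub>v x' = Q *\<^sub>v (M *\<^sub>v ((P * Q) *\<^sub>v x))" unfolding C_def x'_def using P Q M xc
        by (simp add: assoc_mult_mat[OF Q M P] assoc_mult_mat_vec[OF Q MP Qx] assoc_mult_mat_vec[OF M P Qx])
      also have "\<dots> = Q *\<^sub>v (l \<cdot>\<^sub>v x + c \<cdot>\<^sub>v w)" using PQ xc Mx by simp
      also have "\<dots> = l \<cdot>\<^sub>v x' + c \<cdot>\<^sub>v ?e"
        using Q xc w Qw by (simp add: mult_add_distrib_mat_vec mult_mat_vec x'_def)
      finally show ?thesis .
    qed
    define y where "y = vec m (\<lambda>i. x' $ Suc i)"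
    have "C4 *\<^sub>v y = l \<cdot>\<^sub>v y"
    proof (rule eq_vecI)
      fix i assume "i < dim_vec (l \<cdot>\<^sub>v y)"
      then have i: "i < m" by (simp add: y_def)
      have "(C *\<^sub>v x') $ Suc i = (\<Sum>c<n. C $$ (Suc i,c) * x' $ c)"
        using C i n x'c by (simp add: scalar_prod_def atLeast0LessThan del: sum.lessThan_Suc)
      also have "\<dots> = C $$ (Suc i,0) * x' $ 0 + (\<Sum>c<m. C $$ (Suc i,Suc c) * x' $ Suc c)"
        unfolding n by (rule sum_lessThan_Suc_first)
      also have "\<dots> = (C4 *\<^sub>v y) $ i"
        using i n Ccol[of "Suc i"] C4c by (simp add: C4_def y_def scalar_prod_def atLeast0LessThan)
      finally show "(C4 *\<^sub>v y) $ i = (l \<cdot>\<^sub>v y) $ i"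
        using Cx' i n x'c by (simp add: y_def)
    qed (auto simp: y_def C4_def)
    note C4y = this
    have yc: "y \<in> carrier_vec m" by (simp add: y_def)
    show "poly (char_poly C4) l = 0"
    proof (rule ccontr)
      assume np: "poly (char_poly C4) l \<noteq> 0"
      have "y = 0\<^sub>v m"
      proof (rule ccontr)
        assume "y \<noteq> 0\<^sub>v m"
        then have "eigenvalue C4 l" unfolding eigenvalue_def eigenvector_def
          using C4y yc C4c by auto
        then show False using np eigenvalue_root_char_poly[OF C4c] by simp
      qed
      note y0 = this
      have x'e: "x' = (x' $ 0) \<cdot>\<^sub>v ?e"
      proof (rule eq_vecI)
        fix i assume "i < dim_vec ((x' $ 0) \<cdot>\<^sub>v ?e)" then have i: "i < n" by simp
        show "x' $ i = ((x' $ 0) \<cdot>\<^sub>v ?e) $ i"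
        proof (cases i)
          case (Suc i0) then have "y $ i0 = 0" using y0 i n by simp
          then show ?thesis using Suc i n by (simp add: y_def)
        qed (use i in simp)
      qed (use x'c in simp)
      have "x = (P * Q) *\<^sub>v x" using PQ xc by simp
      also have "\<dots> = P *\<^sub>v x'" using P Q xc by (simp add: x'_def)
      also have "\<dots> = (x' $ 0) \<cdot>\<^sub>v w" by (subst x'e) (simp add: mult_mat_vec[OF P] Pe)
      finally show False using nd by blast
    qed
  qed
  show ?thesis
    by (rule exI[of _ "char_poly C4"]) (use eig in \<open>auto simp: cp cpC cp1\<close>)
qed



lemma mult_entry: "A \<in> carrier_mat n n \<Longrightarrow> B \<in> carrier_mat n n \<Longrightarrow> a < n \<Longrightarrow> b < n \<Longrightarrow>
  (A * B) $$ (a,b) = (\<Sum>c<n. A $$ (a,c) * B $$ (c,b))"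
  by (simp add: scalar_prod_def atLeast0LessThan)

lemma CH_coeff:
  fixes M :: "real mat"
  assumes M: "M \<in> carrier_mat n n" and a: "a < n" and b: "b < n"
  defines "Ad \<equiv> adj_mat (char_poly_matrix M)"
  shows "coeff (char_poly M) i * (if a = b then 1 else 0) =
     (if i = 0 then 0 else coeff (Ad $$ (a,b)) (i-1)) - (\<Sum>c<n. M$$(a,c) * coeff (Ad $$ (c,b)) i)"
proof -
  let ?N = "char_poly_matrix M"
  have N: "?N \<in> carrier_mat n n" using M by simp
  have Adc: "Ad \<in> carrier_mat n n" unfolding Ad_def using adj_mat(1)[OF N] .
  have "(?N * Ad) $$ (a,b) = (char_poly M \<cdot>\<^sub>m 1\<^sub>m n) $$ (a,b)"
    unfolding Ad_def adj_mat(2)[OF N] char_poly_def ..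
  also have "\<dots> = (if a = b then char_poly M else 0)" using a b by simp
  finally have e: "(\<Sum>c<n. ?N $$ (a,c) * Ad $$ (c,b)) = (if a = b then char_poly M else 0)"
    using mult_entry[OF N Adc a b] by simp
  have "(\<Sum>c<n. ?N $$ (a,c) * Ad $$ (c,b)) = (\<Sum>c<n. (if a = c then pCons 0 (Ad $$ (c,b)) else 0) - Polynomial.smult (M $$ (a,c)) (Ad $$ (c,b)))"
    by (rule sum.cong) (use M a in \<open>auto simp: char_poly_matrix_def algebra_simps\<close>)
  also have "\<dots> = pCons 0 (Ad $$ (a,b)) - (\<Sum>c<n. Polynomial.smult (M $$ (a,c)) (Ad $$ (c,b)))"
    using a by (simp add: sum_subtractf)
  finally have "coeff (if a = b then char_poly M else 0) i = coeff (pCons 0 (Ad $$ (a,b)) - (\<Sum>c<n. Polynomial.smult (M $$ (a,c)) (Ad $$ (c,b)))) i"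
    using e by simp
  then show ?thesis by (cases i) (auto simp: coeff_sum)
qed

lemma sum_delta_r2: "j < (n::nat) \<Longrightarrow> (\<Sum>c<n. f c * (g * (if c = j then 1 else (0::real)))) = f j * g"
  by (subst sum.remove[of _ j]) auto

lemma CH:
  fixes M :: "real mat"
  assumes M: "M \<in> carrier_mat n n" and a: "a < n" and b: "b < n"
  shows "(\<Sum>i\<le>degree (char_poly M). coeff (char_poly M) i * (M ^\<^sub>m i) $$ (a,b)) = 0"
proof -
  define Ad where "Ad = adj_mat (char_poly_matrix M)"
  define p where "p = char_poly M"
  define K where "K = Suc (degree p + (\<Sum>a<n. \<Sum>b<n. degree (Ad $$ (a,b))))"
  have degK: "degree (Ad $$ (c,d)) < K" if "c < n" "d < n" for c d
  proof -
    have "degree (Ad $$ (c,d)) \<le> (\<Sum>b<n. degree (Ad $$ (c,b)))"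
      by (rule member_le_sum) (use that in auto)
    also have "\<dots> \<le> (\<Sum>a<n. \<Sum>b<n. degree (Ad $$ (a,b)))"
      by (rule member_le_sum[of c "{..<n}" "\<lambda>a. \<Sum>b<n. degree (Ad $$ (a,b))"]) (use that in auto)
    finally show ?thesis unfolding K_def by simp
  qed
  define bm where "bm i c = (if i = 0 then 0 else coeff (Ad $$ (c,b)) (i-1))" for i c
  define T where "T i = (\<Sum>c<n. (M ^\<^sub>m i) $$ (a,c) * bm i c)" for i
  have Mi: "M ^\<^sub>m i \<in> carrier_mat n n" for i using M by simp
  have step: "coeff p i * (M ^\<^sub>m i) $$ (a,b) = T i - T (Suc i)" for i
  proof -
    have "coeff p i * (M ^\<^sub>m i) $$ (a,b) = (\<Sum>c<n. (M ^\<^sub>m i) $$ (a,c) * (coeff p i * (if c = b then 1 else 0)))"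
      using b by (simp add: sum_delta_r2 mult.commute)
    also have "\<dots> = (\<Sum>c<n. (M ^\<^sub>m i) $$ (a,c) * (bm i c - (\<Sum>d<n. M$$(c,d) * coeff (Ad $$ (d,b)) i)))"
      by (rule sum.cong[OF refl]) (use CH_coeff[OF M _ b, of _ i] in \<open>simp add: bm_def Ad_def p_def\<close>)
    also have "\<dots> = T i - (\<Sum>c<n. \<Sum>d<n. (M ^\<^sub>m i) $$ (a,c) * (M$$(c,d) * coeff (Ad $$ (d,b)) i))"
      unfolding T_def by (simp add: right_diff_distrib sum_subtractf sum_distrib_left)
    also have "(\<Sum>c<n. \<Sum>d<n. (M ^\<^sub>m i) $$ (a,c) * (M$$(c,d) * coeff (Ad $$ (d,b)) i))
       = (\<Sum>d<n. (\<Sum>c<n. (M ^\<^sub>m i) $$ (a,c) * M$$(c,d)) * coeff (Ad $$ (d,b)) i)"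
      by (subst sum.swap) (simp add: sum_distrib_right mult.assoc)
    also have "\<dots> = T (Suc i)"
      unfolding T_def bm_def by (rule sum.cong[OF refl]) (use Mi M a in \<open>simp add: scalar_prod_def atLeast0LessThan\<close>)
    finally show ?thesis .
  qed
  have "(\<Sum>i\<le>degree p. coeff p i * (M ^\<^sub>m i) $$ (a,b)) = (\<Sum>i\<le>K. coeff p i * (M ^\<^sub>m i) $$ (a,b))"
    by (rule sum.mono_neutral_left) (auto simp: K_def coeff_eq_0)
  also have "\<dots> = (\<Sum>i\<le>K. T i - T (Suc i))" by (simp add: step)
  also have "\<dots> = T 0 - T (Suc K)" by (rule sum_telescope)
  also have "\<dots> = 0" unfolding T_def bm_def using degK b by (simp add: coeff_eq_0)
  finally show ?thesis unfolding p_def .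
qed



lemma lin_sum:
  fixes g :: "real poly"
  assumes g: "g \<noteq> 0"
  shows "(\<Sum>i\<le>degree ([:-l,1:]*g). coeff ([:-l,1:]*g) i * X i)
     = (\<Sum>i\<le>degree g. coeff g i * X (Suc i)) - l * (\<Sum>i\<le>degree g. coeff g i * X i)"
proof -
  have d: "degree ([:-l,1:]*g) = Suc (degree g)" using g by (subst degree_mult_eq) auto
  have c: "coeff ([:-l,1:]*g) i = (case i of 0 \<Rightarrow> 0 | Suc j \<Rightarrow> coeff g j) - l * coeff g i" for i
    by (cases i) (simp_all add: mult_pCons_left)
  have "(\<Sum>i\<le>Suc (degree g). coeff ([:-l,1:]*g) i * X i)
      = (\<Sum>i\<le>Suc (degree g). (case i of 0 \<Rightarrow> 0 | Suc j \<Rightarrow> coeff g j) * X i) - l * (\<Sum>i\<le>Suc (degree g). coeff g i * X i)"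
  proof -
    have "(\<Sum>i\<le>Suc (degree g). coeff ([:-l,1:]*g) i * X i)
      = (\<Sum>i\<le>Suc (degree g). (case i of 0 \<Rightarrow> 0 | Suc j \<Rightarrow> coeff g j) * X i - l * (coeff g i * X i))"
      by (rule sum.cong[OF refl]) (simp only: c left_diff_distrib mult.assoc)
    then show ?thesis by (simp only: sum_subtractf sum_distrib_left)
  qed
  also have "(\<Sum>i\<le>Suc (degree g). (case i of 0 \<Rightarrow> 0 | Suc j \<Rightarrow> coeff g j) * X i) = (\<Sum>i\<le>degree g. coeff g i * X (Suc i))"
    by (subst sum.atMost_Suc_shift) simp
  also have "(\<Sum>i\<le>Suc (degree g). coeff g i * X i) = (\<Sum>i\<le>degree g. coeff g i * X i)"
    by (simp add: coeff_eq_0)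
  finally show ?thesis unfolding d .
qed



lemma simple_iff:
  fixes M :: "real mat"
  assumes M: "M \<in> carrier_mat n n" and n: "n = Suc m" and w: "w \<in> carrier_vec n" and w0: "w $ 0 \<noteq> 0"
    and ev: "M *\<^sub>v w = l \<cdot>\<^sub>v w"
  shows "simple_eigenvalue M l \<longleftrightarrow> KP M n l w"
proof -
  obtain g where g: "char_poly M = [:-l,1:]*g" and iff: "poly g l \<noteq> 0 \<longleftrightarrow> KP M n l w"
    using gen[OF assms] by blast
  have cp0: "char_poly M \<noteq> 0" using degree_monic_char_poly[OF M] by (metis coeff_0 zero_neq_one)
  then have g0: "g \<noteq> 0" using g by auto
  have o1: "order l [:-l,1:] = 1" using order_power_n_n[of l 1] by simp
  have "order l (char_poly M) = 1 + order l g" unfolding g using cp0 g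
    by (subst order_mult) (auto simp: o1)
  then show ?thesis unfolding simple_eigenvalue_def iff[symmetric] using g0 order_root[of g l] by auto
qed

lemma AP:
  fixes M :: "real mat"
  assumes M: "M \<in> carrier_mat n n" and n: "n = Suc m" and w: "w \<in> carrier_vec n" and z: "z \<in> carrier_vec n"
    and wp: "\<forall>i<n. w$i > 0" and zp: "\<forall>i<n. z$i > 0"
    and ev: "M *\<^sub>v w = l \<cdot>\<^sub>v w" and evz: "transpose_mat M *\<^sub>v z = l \<cdot>\<^sub>v z"
    and s: "simple_eigenvalue M l"
  shows "algebraically_positive M"
proof -
  have w0: "w$0 \<noteq> 0" using wp n by auto
  have z0: "z$0 \<noteq> 0" using zp n by auto
  obtain g where g: "char_poly M = [:-l,1:]*g" and iff: "poly g l \<noteq> 0 \<longleftrightarrow> KP M n l w"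
    using gen[OF M n w w0 ev] by blast
  have KPw: "KP M n l w" using simple_iff[OF M n w w0 ev] s by simp
  have gl: "poly g l \<noteq> 0" using iff KPw by simp
  have cp0: "char_poly M \<noteq> 0" using degree_monic_char_poly[OF M] by (metis coeff_0 zero_neq_one)
  then have g0: "g \<noteq> 0" using g by auto
  have MT: "transpose_mat M \<in> carrier_mat n n" using M by simp
  have sT: "simple_eigenvalue (transpose_mat M) l"
    using s char_poly_transpose_mat[OF M] unfolding simple_eigenvalue_def by simp
  have KPz: "KP (transpose_mat M) n l z" using simple_iff[OF MT n z z0 evz] sT by simp
  define G where "G p q = (\<Sum>i\<le>degree g. coeff g i * (M ^\<^sub>m i) $$ (p,q))" for p q
  have Mi: "M ^\<^sub>m i \<in> carrier_mat n n" for i using M by simp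
  have GM: "(\<Sum>c<n. G p c * M $$ (c,q)) = l * G p q" if pq: "p<n" "q<n" for p q
  proof -
    have Ment: "(M ^\<^sub>m i * M) $$ (p,q) = (\<Sum>c<n. (M ^\<^sub>m i)$$(p,c) * M$$(c,q))" for i
      using mult_entry[OF Mi M pq] by simp
    have "0 = (\<Sum>i\<le>degree (char_poly M). coeff (char_poly M) i * (M ^\<^sub>m i) $$ (p,q))"
      using CH[OF M pq] by simp
    also have "\<dots> = (\<Sum>i\<le>degree g. coeff g i * (M ^\<^sub>m Suc i) $$ (p,q)) - l * G p q"
      unfolding g G_def by (rule lin_sum[OF g0])
    also have "(\<Sum>i\<le>degree g. coeff g i * (M ^\<^sub>m Suc i) $$ (p,q))
       = (\<Sum>i\<le>degree g. \<Sum>c<n. coeff g i * (M ^\<^sub>m i)$$(p,c) * M$$(c,q))"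
      by (simp add: Ment sum_distrib_left mult.assoc)
    also have "\<dots> = (\<Sum>c<n. \<Sum>i\<le>degree g. coeff g i * (M ^\<^sub>m i)$$(p,c) * M$$(c,q))"
      by (rule sum.swap)
    also have "\<dots> = (\<Sum>c<n. G p c * M$$(c,q))" by (simp add: G_def sum_distrib_right)
    finally show ?thesis by simp
  qed
  have rows: "\<exists>d. \<forall>q<n. G p q = d * z$q" if p: "p<n" for p
  proof -
    define r where "r = vec n (\<lambda>q. G p q)"
    have rc: "r \<in> carrier_vec n" by (simp add: r_def)
    have "transpose_mat M *\<^sub>v r = l \<cdot>\<^sub>v r + 0 \<cdot>\<^sub>v z"
    proof (rule eq_vecI)
      fix q assume "q < dim_vec (l \<cdot>\<^sub>v r + 0 \<cdot>\<^sub>v z)"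
      then have q: "q < n" using z by simp
      have "(transpose_mat M *\<^sub>v r) $ q = (\<Sum>c<n. G p c * M $$ (c,q))"
        using M q by (simp add: r_def scalar_prod_def atLeast0LessThan mult.commute)
      then show "(transpose_mat M *\<^sub>v r) $ q = (l \<cdot>\<^sub>v r + 0 \<cdot>\<^sub>v z) $ q"
        using GM[OF p q] q z by (simp add: r_def)
    qed (use M z in \<open>simp add: r_def\<close>)
    then obtain d where rd: "r = d \<cdot>\<^sub>v z" using KPz rc unfolding KP_def by blast
    have "\<forall>q<n. G p q = d * z$q"
    proof (intro allI impI)
      fix q assume q: "q < n"
      have "r $ q = (d \<cdot>\<^sub>v z) $ q" using rd by simp
      then show "G p q = d * z$q" using q z by (simp add: r_def)
    qed
    then show ?thesis by blast
  qed
  have "w $ 0 \<noteq> (0\<^sub>v n :: real vec) $ 0" using w0 n by simp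
  then have "w \<noteq> 0\<^sub>v n" by metis
  then have eigw: "eigenvector M w l" unfolding eigenvector_def using w ev M by simp
  have Gw: "(\<Sum>q<n. G p q * w$q) = poly g l * w$p" if p: "p<n" for p
  proof -
    have Miw: "(\<Sum>q<n. (M ^\<^sub>m i)$$(p,q) * w$q) = l^i * w$p" for i
    proof -
      have "(M ^\<^sub>m i *\<^sub>v w) $ p = l^i * w$p" using eigenvector_pow[OF M eigw, of i] p w by simp
      then show ?thesis using p w M by (simp add: scalar_prod_def atLeast0LessThan)
    qed
    have "(\<Sum>q<n. G p q * w$q) = (\<Sum>q<n. \<Sum>i\<le>degree g. coeff g i * ((M ^\<^sub>m i)$$(p,q) * w$q))"
      by (simp add: G_def sum_distrib_right mult.assoc)
    also have "\<dots> = (\<Sum>i\<le>degree g. coeff g i * (\<Sum>q<n. (M ^\<^sub>m i)$$(p,q) * w$q))"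
      by (subst sum.swap) (simp add: sum_distrib_left)
    also have "\<dots> = (\<Sum>i\<le>degree g. coeff g i * l^i) * w$p"
      by (simp add: Miw sum_distrib_right mult.assoc)
    also have "\<dots> = poly g l * w$p" by (simp add: poly_altdef)
    finally show ?thesis .
  qed
  define zw where "zw = (\<Sum>q<n. z$q * w$q)"
  have zw: "zw > 0" unfolding zw_def using wp zp n
    by (intro sum_pos) auto
  have Gform: "G p q = poly g l * w$p * z$q / zw" if p: "p<n" and q: "q<n" for p q
  proof -
    obtain d where d: "\<forall>q<n. G p q = d * z$q" using rows[OF p] by blast
    have "(\<Sum>q<n. G p q * w$q) = d * zw" unfolding zw_def sum_distrib_left
      by (rule sum.cong) (use d in auto)
    then have "d = poly g l * w$p / zw" using Gw[OF p] zw by (simp add: field_simps)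
    then show ?thesis using d q by simp
  qed
  define f where "f = Polynomial.smult (zw / poly g l) g"
  have degf: "degree f = degree g" unfolding f_def using zw gl by simp
  show ?thesis unfolding algebraically_positive_def
  proof (intro conjI exI allI impI)
    show "square_mat M" using M by simp
    fix p q assume "p < dim_row M" "q < dim_col M"
    then have p: "p < n" and q: "q < n" using M by auto
    have "mat_poly_eval f M $$ (p,q) = (zw / poly g l) * G p q"
      unfolding mat_poly_eval_def using p q M
      by (simp add: degf G_def f_def sum_distrib_left mult.assoc)
    also have "\<dots> = w$p * z$q" using Gform[OF p q] zw gl by simp
    also have "\<dots> > 0" using wp zp p q by simp
    finally show "mat_poly_eval f M $$ (p,q) > 0" .
  qed
qed



lemma mem_pairs: "((P::nat), Q) \<in> {(k, k+j)} \<union> {(i, i+1) | i. 1 \<le> i \<and> i \<le> k - 1} \<longleftrightarrow> (P = k \<and> Q = k+j) \<or> (1 \<le> P \<and> P \<le> k-1 \<and> Q = P+1)"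
  by auto

lemma Bent:
  assumes k: "k \<ge> 1" and j: "j \<ge> 1" and p: "p < k+n" and q: "q < k+n"
  shows "thm23_B n k A j l $$ (p,q) =
   (if p < k then (if q = p then 2*l else if (p < k-1 \<and> q = p+1) \<or> (p = k-1 \<and> q = k+(j-1)) then -l else 0)
    else if q < k then (if p = k \<and> q = 0 then - A$$(0,j-1) else 0)
    else if p = k \<and> q = k+(j-1) then 2 * A$$(0,j-1) else A$$(p-k,q-k))"
proof -
  have e0: "thm23_B n k A j l $$ (p,q) = (let p = p + 1; q = q + 1; a = (\<lambda>r s. A $$ (r - 1, s - 1)) in
     if p = q \<and> p \<in> {1..k} then 2 * l
     else if (p,q) \<in> {(k, k+j)} \<union> {(i, i+1) | i. 1 \<le> i \<and> i \<le> k - 1} then - l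
     else if (p,q) = (k+1, 1) then - a 1 j
     else if p \<in> {k+1..k+n} \<and> q \<in> {k+1..k+n} \<and> (p,q) \<noteq> (k+1, k+j) then a (p-k) (q-k)
     else if (p,q) = (k+1, k+j) then 2 * a 1 j
     else 0)"
    unfolding thm23_B_def index_mat(1)[OF p q] split by (rule refl)
  note e = e0[unfolded Let_def mem_pairs]
  show ?thesis
  proof (cases "p < k")
    case True
    then show ?thesis unfolding e using k j p q
      by (cases "q = p"; cases "(p < k-1 \<and> q = p+1) \<or> (p = k-1 \<and> q = k+(j-1))") auto
  next
    case False
    then show ?thesis unfolding e using k j p q
      by (cases "q < k"; cases "p = k \<and> q = 0"; cases "p = k \<and> q = k+(j-1)") auto
  qed
qed


lemma sum_split: "(\<Sum>q<k+n. f q) = (\<Sum>q<k. f q) + (\<Sum>i<(n::nat). f (k+i))"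
  by (induct n) (auto simp: add.assoc)

lemma sum_delta_c: "t < (N::nat) \<Longrightarrow> (\<Sum>q<N. (if q = t then c else 0) * f q) = c * (f t :: real)"
  by (subst sum.remove[of _ t]) auto

lemma sum_low: "(\<Sum>q<k+n. (if k \<le> q then g (q-k) else 0) * x$q) = (\<Sum>i<(n::nat). g i * (x$(k+i) :: real))"
  by (simp add: sum_split)

lemma Bcarrier: "thm23_B n k A j l \<in> carrier_mat (k+n) (k+n)"
  unfolding thm23_B_def by simp

lemma BX:
  fixes A :: "real mat"
  assumes k: "k \<ge> 1" and j: "j \<in> {1..n}" and A: "A \<in> carrier_mat n n"
    and x: "x \<in> carrier_vec (k+n)" and p: "p < k+n"
  defines "y \<equiv> vec n (\<lambda>i. x$(k+i))"
  shows "(thm23_B n k A j l *\<^sub>v x) $ p =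
    (if p < k then 2*l*x$p - l * x$(if p < k-1 then p+1 else k+(j-1))
     else if p = k then - A$$(0,j-1) * x$0 + (A *\<^sub>v y)$0 + A$$(0,j-1) * x$(k+(j-1))
     else (A *\<^sub>v y)$(p-k))"
proof -
  let ?B = "thm23_B n k A j l"
  let ?a = "A$$(0,j-1)"
  have j1: "j \<ge> 1" and jn: "j \<le> n" using j by auto
  have e: "(?B *\<^sub>v x)$p = (\<Sum>q<k+n. ?B$$(p,q) * x$q)"
    using Bcarrier[of n k A j l] p x by (simp add: scalar_prod_def atLeast0LessThan)
  have Ay: "(A *\<^sub>v y)$r = (\<Sum>i<n. A$$(r,i) * x$(k+i))" if "r < n" for r
    using A that by (simp add: scalar_prod_def atLeast0LessThan y_def)
  show ?thesis
  proof (cases "p < k")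
    case True
    define t where "t = (if p < k-1 then p+1 else k+(j-1))"
    have t: "t < k+n" "t \<noteq> p" using True jn j1 by (auto simp: t_def)
    have "(\<Sum>q<k+n. ?B$$(p,q) * x$q) = (\<Sum>q<k+n. (if q = p then 2*l else 0) * x$q + (if q = t then -l else 0) * x$q)"
      by (rule sum.cong[OF refl]) (use True k j1 p t in \<open>auto simp: Bent t_def\<close>)
    also have "\<dots> = 2*l*x$p - l * x$t"
      by (simp only: sum.distrib sum_delta_c[OF p] sum_delta_c[OF t(1)]; simp)
    finally show ?thesis using e True by (simp add: t_def)
  next
    case False
    show ?thesis
    proof (cases "p = k")
      case True
      have t: "k + (j-1) < k+n" "0 < k+n" using jn j1 by auto
      have "(\<Sum>q<k+n. ?B$$(p,q) * x$q) = (\<Sum>q<k+n. (if q = 0 then -?a else 0) * x$q + (if q = k+(j-1) then ?a else 0) * x$q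
           + (if k \<le> q then A$$(0,q-k) else 0) * x$q)"
        by (rule sum.cong[OF refl]) (use True k j1 p in \<open>auto simp: Bent\<close>)
      also have "\<dots> = -?a * x$0 + ?a * x$(k+(j-1)) + (A *\<^sub>v y)$0"
        using jn j1 by (simp only: sum.distrib sum_delta_c[OF t(1)] sum_delta_c[OF t(2)] sum_low[where g="\<lambda>i. A$$(0,i)"] Ay; simp)
      finally show ?thesis using e True by simp
    next
      case False
      have "(\<Sum>q<k+n. ?B$$(p,q) * x$q) = (\<Sum>q<k+n. (if k \<le> q then A$$(p-k,q-k) else 0) * x$q)"
        by (rule sum.cong[OF refl]) (use False \<open>\<not> p < k\<close> k j1 p in \<open>auto simp: Bent\<close>)
      also have "\<dots> = (A *\<^sub>v y)$(p-k)"
        using p \<open>\<not> p < k\<close> by (simp only: sum_low[where g="\<lambda>i. A$$(p-k,i)"] Ay; simp)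
      finally show ?thesis using e False \<open>\<not> p < k\<close> by simp
    qed
  qed
qed


lemma BTX:
  fixes A :: "real mat"
  assumes k: "k \<ge> 1" and j: "j \<in> {1..n}" and A: "A \<in> carrier_mat n n"
    and x: "x \<in> carrier_vec (k+n)" and q: "q < k+n"
  defines "y \<equiv> vec n (\<lambda>i. x$(k+i))"
  shows "(transpose_mat (thm23_B n k A j l) *\<^sub>v x) $ q =
    (if q < k then 2*l*x$q - (if 0 < q then l * x$(q-1) else 0) - (if q = 0 then A$$(0,j-1) * x$k else 0)
     else (transpose_mat A *\<^sub>v y)$(q-k) + (if q = k+(j-1) then A$$(0,j-1) * x$k - l * x$(k-1) else 0))"
proof -
  let ?B = "thm23_B n k A j l"
  let ?a = "A$$(0,j-1)"
  have j1: "j \<ge> 1" and jn: "j \<le> n" using j by auto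
  have e: "(transpose_mat ?B *\<^sub>v x)$q = (\<Sum>p<k+n. ?B$$(p,q) * x$p)"
    using Bcarrier[of n k A j l] q x by (simp add: scalar_prod_def atLeast0LessThan)
  have Ay: "(transpose_mat A *\<^sub>v y)$r = (\<Sum>i<n. A$$(i,r) * x$(k+i))" if "r < n" for r
    using A that by (simp add: scalar_prod_def atLeast0LessThan y_def)
  show ?thesis
  proof (cases "q < k")
    case True
    have t: "q - 1 < k+n" "k < k+n" using q jn j1 by auto
    have "(\<Sum>p<k+n. ?B$$(p,q) * x$p) = (\<Sum>p<k+n. (if p = q then 2*l else 0) * x$p
        + (if p = q-1 then (if 0 < q then -l else 0) else 0) * x$p + (if p = k then (if q = 0 then -?a else 0) else 0) * x$p)"
      by (rule sum.cong[OF refl]) (use True k j1 q in \<open>auto simp: Bent\<close>)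
    also have "\<dots> = 2*l*x$q - (if 0 < q then l * x$(q-1) else 0) - (if q = 0 then ?a * x$k else 0)"
      by (simp only: sum.distrib sum_delta_c[OF q] sum_delta_c[OF t(1)] sum_delta_c[OF t(2)]; simp)
    finally show ?thesis using e True by simp
  next
    case False
    have t: "k - 1 < k+n" "k < k+n" using q jn j1 by auto
    have "(\<Sum>p<k+n. ?B$$(p,q) * x$p) = (\<Sum>p<k+n. (if k \<le> p then A$$(p-k,q-k) else 0) * x$p
        + (if p = k then (if q = k+(j-1) then ?a else 0) else 0) * x$p + (if p = k-1 then (if q = k+(j-1) then -l else 0) else 0) * x$p)"
      by (rule sum.cong[OF refl]) (use False k j1 q in \<open>auto simp: Bent\<close>)
    also have "\<dots> = (transpose_mat A *\<^sub>v y)$(q-k) + (if q = k+(j-1) then ?a * x$k - l * x$(k-1) else 0)"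
      using q False by (simp only: sum.distrib sum_delta_c[OF t(1)] sum_delta_c[OF t(2)]
          sum_low[where g="\<lambda>i. A$$(i,q-k)"] Ay; simp)
    finally show ?thesis using e False by simp
  qed
qed



lemma chain_eq: assumes "\<forall>p<m. f p = f (Suc p)" and "i \<le> m" shows "f i = f m"
  using assms(2) by (induction i rule: inc_induct) (use assms(1) in auto)

theorem theorem2p3:
  fixes n k j :: nat and A :: "real mat" and l :: real and u v :: "real vec"
  assumes "n \<ge> 1" and "k \<ge> 1"
    and "A \<in> carrier_mat n n"
    and "j \<in> {1..n}"
    and "A $$ (0, j - 1) > 0"
    and "l > 0"
    and "simple_eigenvalue A l"
    and "u \<in> carrier_vec n" and "v \<in> carrier_vec n"
    and "\<forall>i < n. u $ i > 0" and "\<forall>i < n. v $ i > 0"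
    and "A *\<^sub>v u = l \<cdot>\<^sub>v u"
    and "transpose_mat A *\<^sub>v v = l \<cdot>\<^sub>v v"
  shows "simple_eigenvalue (thm23_B n k A j l) l
    \<and> thm23_B n k A j l *\<^sub>v vec (k+n) (\<lambda>i. if i < k then u $ (j - 1) else u $ (i - k))
        = l \<cdot>\<^sub>v vec (k+n) (\<lambda>i. if i < k then u $ (j - 1) else u $ (i - k))
    \<and> transpose_mat (thm23_B n k A j l) *\<^sub>v
          vec (k+n) (\<lambda>i. if i < k then A $$ (0, j - 1) * v $ 0 / l else v $ (i - k))
        = l \<cdot>\<^sub>v vec (k+n) (\<lambda>i. if i < k then A $$ (0, j - 1) * v $ 0 / l else v $ (i - k))
    \<and> algebraically_positive (thm23_B n k A j l)"
proof -
  note n1 = assms(1) and k = assms(2) and A = assms(3) and j = assms(4) and apos = assms(5)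
    and l = assms(6) and sA = assms(7) and u = assms(8) and v = assms(9) and up = assms(10)
    and vp = assms(11) and Au = assms(12) and Av = assms(13)
  obtain m where nm: "n = Suc m" using n1 by (cases n) auto
  have km: "k + n = Suc (k - 1 + n)" using k by simp
  let ?B = "thm23_B n k A j l"
  let ?a = "A $$ (0, j-1)"
  have B: "?B \<in> carrier_mat (k+n) (k+n)" by (rule Bcarrier)
  have j1: "j \<ge> 1" and j0: "j - 1 < n" using j by auto
  define W where "W = vec (k+n) (\<lambda>i. if i < k then u $ (j - 1) else u $ (i - k))"
  define Z where "Z = vec (k+n) (\<lambda>i. if i < k then ?a * v $ 0 / l else v $ (i - k))"
  have Wc: "W \<in> carrier_vec (k+n)" and Zc: "Z \<in> carrier_vec (k+n)" by (simp_all add: W_def Z_def)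
  have Wp: "\<forall>i<k+n. W$i > 0"
  proof (intro allI impI)
    fix i assume i: "i < k+n"
    show "W$i > 0"
    proof (cases "i < k")
      case True then show ?thesis using up j0 i by (simp add: W_def)
    next
      case False then have "i - k < n" using i by arith
      then show ?thesis using up False i by (simp add: W_def)
    qed
  qed
  have v0p: "v$0 > 0" using vp nm by simp
  have Zp: "\<forall>i<k+n. Z$i > 0"
  proof (intro allI impI)
    fix i assume i: "i < k+n"
    show "Z$i > 0"
    proof (cases "i < k")
      case True then show ?thesis using v0p apos l i by (simp add: Z_def)
    next
      case False then have "i - k < n" using i by arith
      then show ?thesis using vp False i by (simp add: Z_def)
    qed
  qed
  have Wy: "vec n (\<lambda>i. W$(k+i)) = u" using u by (intro eq_vecI) (auto simp: W_def)
  have Zy: "vec n (\<lambda>i. Z$(k+i)) = v" using v by (intro eq_vecI) (auto simp: Z_def)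
  have Aui: "(A *\<^sub>v u) $ i = l * u $ i" if "i < n" for i
  proof -
    have "(A *\<^sub>v u) $ i = (l \<cdot>\<^sub>v u) $ i" using Au by simp
    then show ?thesis using that u by simp
  qed
  have Avi: "(transpose_mat A *\<^sub>v v) $ i = l * v $ i" if "i < n" for i
  proof -
    have "(transpose_mat A *\<^sub>v v) $ i = (l \<cdot>\<^sub>v v) $ i" using Av by simp
    then show ?thesis using that v by simp
  qed
  have BW: "?B *\<^sub>v W = l \<cdot>\<^sub>v W"
  proof (rule eq_vecI)
    fix p assume "p < dim_vec (l \<cdot>\<^sub>v W)" then have p: "p < k+n" by (simp add: W_def)
    have e: "(?B *\<^sub>v W)$p = (if p < k then 2*l*W$p - l * W$(if p < k-1 then p+1 else k+(j-1))
     else if p = k then - ?a * W$0 + (A *\<^sub>v u)$0 + ?a * W$(k+(j-1))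
     else (A *\<^sub>v u)$(p-k))"
      using BX[OF k j A Wc p] unfolding Wy .
    have W0': "W$0 = u$(j-1)" using k by (simp add: W_def)
    have Wk: "W$(k+(j-1)) = u$(j-1)" using j0 by (simp add: W_def)
    show "(?B *\<^sub>v W)$p = (l \<cdot>\<^sub>v W)$p"
    proof (cases "p < k")
      case True
      have "W$p = u$(j-1)" "W$(if p < k-1 then p+1 else k+(j-1)) = u$(j-1)"
        using True j0 by (auto simp: W_def)
      then show ?thesis unfolding e using True p Wc by simp
    next
      case False
      show ?thesis
      proof (cases "p = k")
        case True
        have "W$k = u$0" using nm by (simp add: W_def)
        then show ?thesis unfolding e using True p Wc nm Aui[of 0] W0' Wk by simp
      next
        case False
        have "W$p = u$(p-k)" using \<open>\<not> p < k\<close> p by (simp add: W_def)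
        then show ?thesis unfolding e using False \<open>\<not> p < k\<close> p Wc Aui[of "p-k"] by simp
      qed
    qed
  qed (use B in \<open>simp add: W_def\<close>)
  have BZ: "transpose_mat ?B *\<^sub>v Z = l \<cdot>\<^sub>v Z"
  proof (rule eq_vecI)
    fix q assume "q < dim_vec (l \<cdot>\<^sub>v Z)" then have q: "q < k+n" by (simp add: Z_def)
    have e: "(transpose_mat ?B *\<^sub>v Z)$q =
     (if q < k then 2*l*Z$q - (if 0 < q then l * Z$(q-1) else 0) - (if q = 0 then ?a * Z$k else 0)
     else (transpose_mat A *\<^sub>v v)$(q-k) + (if q = k+(j-1) then ?a * Z$k - l * Z$(k-1) else 0))"
      using BTX[OF k j A Zc q] unfolding Zy .
    have Zk: "Z$k = v$0" using nm by (simp add: Z_def)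
    have Zk1: "Z$(k-1) = ?a * v$0 / l" using k by (simp add: Z_def)
    show "(transpose_mat ?B *\<^sub>v Z)$q = (l \<cdot>\<^sub>v Z)$q"
    proof (cases "q < k")
      case True
      have Zq: "Z$q = ?a * v$0 / l" using True by (simp add: Z_def)
      have q1: "q - 1 < k" using True by arith
      have Zq1: "Z$(q-1) = ?a * v$0 / l" using q1 by (simp add: Z_def)
      show ?thesis
      proof (cases "q = 0")
        case True
        then show ?thesis unfolding e using \<open>q < k\<close> Zq Zk Zc q l by (simp add: field_simps)
      next
        case False
        then show ?thesis unfolding e using \<open>q < k\<close> Zq Zq1 Zc q l by (simp add: field_simps)
      qed
    next
      case False
      have Zq: "Z$q = v$(q-k)" using False q by (simp add: Z_def)
      then show ?thesis unfolding e using False q Zc Avi[of "q-k"] Zk Zk1 l by (simp add: field_simps)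
    qed
  qed (use B in \<open>simp add: Z_def\<close>)
  have u0p: "u $ 0 > 0" using up nm by simp
  then have u0: "u $ 0 \<noteq> 0" by simp
  have KPA: "KP A n l u" using simple_iff[OF A nm u u0 Au] sA by blast
  have KPB: "KP ?B (k+n) l W"
    unfolding KP_def
  proof (intro ballI allI impI)
    fix x c assume x: "x \<in> carrier_vec (k+n)" and Bx: "?B *\<^sub>v x = l \<cdot>\<^sub>v x + c \<cdot>\<^sub>v W"
    have ZW: "Z \<bullet> W > 0" unfolding scalar_prod_def using Wp Zp Wc k
      by (intro sum_pos) auto
    have "(transpose_mat ?B *\<^sub>v Z) \<bullet> x = Z \<bullet> (?B *\<^sub>v x)"
      by (rule transpose_vec_mult_scalar[OF B x Zc])
    also have "\<dots> = l * (Z \<bullet> x) + c * (Z \<bullet> W)"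
      unfolding Bx using Zc x Wc by (simp add: scalar_prod_add_distrib[of _ "k+n"])
    finally have "l * (Z \<bullet> x) = l * (Z \<bullet> x) + c * (Z \<bullet> W)"
      unfolding BZ using Zc x by (simp add: comm_scalar_prod[of Z "k+n" x])
    then have c0: "c = 0" using ZW by simp
    have "l \<cdot>\<^sub>v x + 0 \<cdot>\<^sub>v W = l \<cdot>\<^sub>v x" by (rule eq_vecI) (use x Wc in auto)
    then have Bx': "?B *\<^sub>v x = l \<cdot>\<^sub>v x" using Bx c0 by simp
    have Bxp: "(?B *\<^sub>v x) $ p = l * x $ p" if "p < k+n" for p using Bx' that x by simp
    define y where "y = vec n (\<lambda>i. x$(k+i))"
    have top: "x$p = x$(if p<k-1 then p+1 else k+(j-1))" if p: "p < k" for p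
    proof -
      have "2*l*x$p - l * x$(if p<k-1 then p+1 else k+(j-1)) = l * x$p"
        using BX[OF k j A x, of p] Bxp[of p] p by simp
      then show ?thesis using l by (simp add: algebra_simps)
    qed
    have chain: "x$p = x$(k+(j-1))" if p: "p < k" for p
    proof -
      have "x$p = x$(k-1)"
        by (rule chain_eq[of "k-1" "\<lambda>i. x$i"]) (use top p in auto)
      also have "\<dots> = x$(k+(j-1))" using top[of "k-1"] k by simp
      finally show ?thesis .
    qed
    have Ay: "A *\<^sub>v y = l \<cdot>\<^sub>v y"
    proof (rule eq_vecI)
      fix i assume "i < dim_vec (l \<cdot>\<^sub>v y)" then have i: "i < n" by (simp add: y_def)
      show "(A *\<^sub>v y) $ i = (l \<cdot>\<^sub>v y) $ i"
      proof (cases i)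
        case 0
        have "- ?a * x$0 + (A *\<^sub>v y)$0 + ?a * x$(k+(j-1)) = l * x$k"
          using BX[OF k j A x, of k] Bxp[of k] nm unfolding y_def by simp
        then show ?thesis using chain[of 0] k 0 i by (simp add: y_def)
      next
        case (Suc i0)
        have "(A *\<^sub>v y)$i = l * x$(k+i)"
          using BX[OF k j A x, of "k+i"] Bxp[of "k+i"] Suc i unfolding y_def by simp
        then show ?thesis using i by (simp add: y_def)
      qed
    qed (use A in \<open>simp add: y_def\<close>)
    have yc: "y \<in> carrier_vec n" by (simp add: y_def)
    have "l \<cdot>\<^sub>v y + 0 \<cdot>\<^sub>v u = l \<cdot>\<^sub>v y" by (rule eq_vecI) (use yc u in auto)
    then have "A *\<^sub>v y = l \<cdot>\<^sub>v y + 0 \<cdot>\<^sub>v u" using Ay by simp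
    then obtain d where d: "y = d \<cdot>\<^sub>v u" using KPA yc unfolding KP_def by blast
    show "\<exists>d. x = d \<cdot>\<^sub>v W"
    proof (intro exI eq_vecI)
      fix p assume "p < dim_vec (d \<cdot>\<^sub>v W)" then have p: "p < k+n" by (simp add: W_def)
      have yi: "x$(k+i) = d * u$i" if "i < n" for i
      proof -
        have "y $ i = (d \<cdot>\<^sub>v u) $ i" using d by simp
        then show ?thesis using that u by (simp add: y_def)
      qed
      show "x $ p = (d \<cdot>\<^sub>v W) $ p"
        using p chain[of p] yi[of "j-1"] yi[of "p-k"] j0 by (cases "p < k") (auto simp: W_def)
    qed (use x in \<open>simp add: W_def\<close>)
  qed
  have W0p: "W $ 0 > 0" by (rule Wp[rule_format]) (use k in simp)
  then have W0: "W $ 0 \<noteq> 0" by simp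
  have sB: "simple_eigenvalue ?B l" using simple_iff[OF B km Wc W0 BW] KPB by blast
  have apB: "algebraically_positive ?B" by (rule AP[OF B km Wc Zc Wp Zp BW BZ sB])
  show ?thesis using sB BW BZ apB unfolding W_def Z_def by simp
qed

end
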